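(* There exist an argumentation semantics $\sigma$ whose extensions are maximal conflict-free sets (w.r.t. set inclusion) and argumentation frameworks $AF=(AR,Attacks)$, $AF'=(AR',Attacks')$ with $AF\preceq_N AF'$ such that the following statement does NOT hold: if for all $E\in\sigma(AF)$ and all $E'\in\sigma(AF')$ we have $E'\not\subseteq AR$ or $E'=E$, then for every $E\in\sigma(AF)$, $$\{(a,b)\in Attacks': a\in AR'\setminus AR,\ b\in E\}=\emptyset\ \Longrightarrow\ \forall E'\in\sigma(AF'),\ E\subseteq E'.$$
   Context: An argumentation framework is a pair $(AR,Attacks)$ with $AR$ a finite set and $Attacks\subseteq AR\times AR$; $a$ attacks $b$ iff $(a,b)\in Attacks$. A set $S$ is conflict-free iff no element of $S$ attacks an element of $S$. An argumentation semantics $\sigma$ assigns to each argumentation framework a set $\sigma(AF)$ of subsets of $AR$; "$\sigma$'s extensions are maximal conflict-free sets" means that for every $AF$, every $E\in\sigma(AF)$ is a $\subseteq$-maximal conflict-free subset of the argument set of $AF$. $AF\preceq_N AF'$ (normal expansion) iff $AR\subseteq AR'$, $Attacks\subseteq Attacks'$ and no $(a,b)\in Attacks'\setminus Attacks$ has both $a,b\in AR$. *)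

theory Defs
  imports Main
begin

type_synonym 'a AF = "'a set \<times> ('a \<times> 'a) set"

definition is_AF :: "'a AF \<Rightarrow> bool" where
  "is_AF AF \<longleftrightarrow> finite (fst AF) \<and> snd AF \<subseteq> fst AF \<times> fst AF"

definition conflict_free :: "'a AF \<Rightarrow> 'a set \<Rightarrow> bool" where
  "conflict_free AF S \<longleftrightarrow> S \<subseteq> fst AF \<and> (\<forall>a\<in>S. \<forall>b\<in>S. (a, b) \<notin> snd AF)"

definition maximal_conflict_free :: "'a AF \<Rightarrow> 'a set \<Rightarrow> bool" where
  "maximal_conflict_free AF S \<longleftrightarrow>
     conflict_free AF S \<and> (\<forall>T. conflict_free AF T \<and> S \<subseteq> T \<longrightarrow> T = S)"

definition normal_expansion :: "'a AF \<Rightarrow> 'a AF \<Rightarrow> bool" where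
  "normal_expansion AF AF' \<longleftrightarrow>
     fst AF \<subseteq> fst AF' \<and> snd AF \<subseteq> snd AF' \<and>
     (\<forall>(a, b) \<in> snd AF' - snd AF. \<not> (a \<in> fst AF \<and> b \<in> fst AF))"

definition extensions_maximal_cf :: "('a AF \<Rightarrow> 'a set set) \<Rightarrow> bool" where
  "extensions_maximal_cf \<sigma> \<longleftrightarrow>
     (\<forall>AF. is_AF AF \<longrightarrow> (\<forall>E\<in>\<sigma> AF. maximal_conflict_free AF E))"

end

theory Submission
  imports Defs
begin

lemma mcf1: "maximal_conflict_free ({0::nat}, {}) {0}"
  unfolding maximal_conflict_free_def conflict_free_def by auto

lemma mcf2: "maximal_conflict_free ({0::nat, 1}, {(0, 1)}) {1}"
  unfolding maximal_conflict_free_def conflict_free_def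
proof (intro conjI allI impI)
  fix T :: "nat set"
  assume h: "(T \<subseteq> fst ({0::nat, 1}, {(0::nat, 1::nat)}) \<and>
          (\<forall>a\<in>T. \<forall>b\<in>T. (a, b) \<notin> snd ({0::nat, 1}, {(0::nat, 1::nat)}))) \<and> {1} \<subseteq> T"
  then have "T \<subseteq> {0,1}" "1 \<in> T" "0 \<notin> T" by auto
  then show "T = {1}" by auto
qed auto

theorem proposition54:
  shows "\<exists>\<sigma> :: nat AF \<Rightarrow> nat set set. extensions_maximal_cf \<sigma> \<and>
    (\<exists>AF AF'. is_AF AF \<and> is_AF AF' \<and> normal_expansion AF AF' \<and>
       \<not> ((\<forall>E\<in>\<sigma> AF. \<forall>E'\<in>\<sigma> AF'. \<not> E' \<subseteq> fst AF \<or> E' = E) \<longrightarrow>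
            (\<forall>E\<in>\<sigma> AF. {(a, b) \<in> snd AF'. a \<in> fst AF' - fst AF \<and> b \<in> E} = {} \<longrightarrow>
               (\<forall>E'\<in>\<sigma> AF'. E \<subseteq> E'))))"
proof (intro exI conjI)
  let ?A = "({0::nat}, {}) :: nat AF"
  let ?B = "({0::nat, 1}, {(0, 1)}) :: nat AF"
  let ?s = "\<lambda>X :: nat AF. if X = ?A then {{0::nat}} else if X = ?B then {{1}} else {}"
  show "extensions_maximal_cf ?s"
    unfolding extensions_maximal_cf_def using mcf1 mcf2 by auto
  show "is_AF ?A" unfolding is_AF_def by auto
  show "is_AF ?B" unfolding is_AF_def by auto
  show "normal_expansion ?A ?B" unfolding normal_expansion_def by auto
  show "\<not> ((\<forall>E\<in>?s ?A. \<forall>E'\<in>?s ?B. \<not> E' \<subseteq> fst ?A \<or> E' = E) \<longrightarrow>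
            (\<forall>E\<in>?s ?A. {(a, b) \<in> snd ?B. a \<in> fst ?B - fst ?A \<and> b \<in> E} = {} \<longrightarrow>
               (\<forall>E'\<in>?s ?B. E \<subseteq> E')))"
    by auto
qed

end
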